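(* Let $\varepsilon>0$, $\Omega\subset\mathbb{R}^2$ bounded open, $u\in\mathcal{SF}_\varepsilon(\Omega)$ and $R\in\mathcal{R}_\varepsilon(u)$. Then the set $$\{u(i): i\in\mathcal{L}_\varepsilon,\ i\in\Gamma\text{ for some }\Gamma\in\mathcal{N}_\varepsilon(u)\text{ with }\Gamma\subset R\}$$ is either empty or consists of exactly two antipodal points of $\mathbb{S}^2$.
   Context: $\mathcal{L}=\{ae_1+b\hat e_2:a,b\in\mathbb{Z}\}$ with $e_1=(1,0)$, $\hat e_2=\frac12(1,\sqrt3)$, $\mathcal{L}_\varepsilon=\varepsilon\mathcal{L}$; $\mathcal{T}_\varepsilon$ is the set of closed triangles with vertices in $\mathcal{L}_\varepsilon$ pairwise at distance $\varepsilon$; $\mathcal{E}_\varepsilon$ the set of segments $[i,j]$, $i,j\in\mathcal{L}_\varepsilon$, $|i-j|=\varepsilon$. $n=(0,0,1)$; $\mathcal{SF}_\varepsilon(\Omega)$ is the set of $u:\mathcal{L}_\varepsilon\to\mathbb{S}^2$ with $u=n$ on $\mathcal{L}_\varepsilon\setminus\Omega$. $\mathcal{N}_\varepsilon(u)=\{[i,j]\in\mathcal{E}_\varepsilon:u(i)=-u(j)\}$. Two triangles of $\mathcal{T}_\varepsilon$ are neighbours if their intersection is an edge in $\mathcal{N}_\varepsilon(u)$, and connected if joined by a finite chain of consecutive neighbours. $\mathcal{R}_\varepsilon(u)$ is the set of admissible interpolation regions: unions of pairwise connected triangles of $\mathcal{T}_\varepsilon$ that are maximal with respect to inclusion. *)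

theory Defs
  imports "HOL-Analysis.Analysis"
begin

type_synonym pt = "real \<times> real"
type_synonym spin = "real \<times> real \<times> real"

definition e1 :: pt where "e1 = (1, 0)"
definition e2hat :: pt where "e2hat = (1/2, sqrt 3 / 2)"

definition lattice :: "real \<Rightarrow> pt set" where
  "lattice eps = {eps *\<^sub>R (of_int a *\<^sub>R e1 + of_int b *\<^sub>R e2hat) | a b :: int. True}"

definition sphere2 :: "spin set" where "sphere2 = {v. norm v = 1}"

definition nvec :: spin where "nvec = (0, 0, 1)"

definition triangles :: "real \<Rightarrow> pt set set" where
  "triangles eps = {convex hull {i, j, k} | i j k.
      i \<in> lattice eps \<and> j \<in> lattice eps \<and> k \<in> lattice eps \<and>
      dist i j = eps \<and> dist j k = eps \<and> dist i k = eps}"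

definition edges :: "real \<Rightarrow> pt set set" where
  "edges eps = {closed_segment i j | i j.
      i \<in> lattice eps \<and> j \<in> lattice eps \<and> dist i j = eps}"

definition SF :: "real \<Rightarrow> pt set \<Rightarrow> (pt \<Rightarrow> spin) set" where
  "SF eps \<Omega> = {u. (\<forall>i\<in>lattice eps. u i \<in> sphere2) \<and>
                    (\<forall>i\<in>lattice eps - \<Omega>. u i = nvec)}"

definition frustrated :: "real \<Rightarrow> (pt \<Rightarrow> spin) \<Rightarrow> pt set set" where
  "frustrated eps u = {closed_segment i j | i j.
      i \<in> lattice eps \<and> j \<in> lattice eps \<and> dist i j = eps \<and> u i = - u j}"

definition neighbours :: "real \<Rightarrow> (pt \<Rightarrow> spin) \<Rightarrow> pt set \<Rightarrow> pt set \<Rightarrow> bool" where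
  "neighbours eps u T1 T2 \<longleftrightarrow> T1 \<in> triangles eps \<and> T2 \<in> triangles eps \<and>
      T1 \<inter> T2 \<in> frustrated eps u"

definition tri_connected :: "real \<Rightarrow> (pt \<Rightarrow> spin) \<Rightarrow> pt set \<Rightarrow> pt set \<Rightarrow> bool" where
  "tri_connected eps u T1 T2 \<longleftrightarrow> T1 \<in> triangles eps \<and> T2 \<in> triangles eps \<and>
      (neighbours eps u)\<^sup>*\<^sup>* T1 T2"

definition connected_unions :: "real \<Rightarrow> (pt \<Rightarrow> spin) \<Rightarrow> pt set set" where
  "connected_unions eps u = {\<Union>C | C. C \<noteq> {} \<and> C \<subseteq> triangles eps \<and>
      (\<forall>T1\<in>C. \<forall>T2\<in>C. tri_connected eps u T1 T2)}"

definition regions :: "real \<Rightarrow> (pt \<Rightarrow> spin) \<Rightarrow> pt set set" where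
  "regions eps u = {R \<in> connected_unions eps u.
      \<forall>R' \<in> connected_unions eps u. R \<subseteq> R' \<longrightarrow> R' = R}"

end

theory Submission
  imports Defs
begin
definition L :: "real \<Rightarrow> int \<Rightarrow> int \<Rightarrow> pt" where
  "L eps a b = eps *\<^sub>R (of_int a *\<^sub>R e1 + of_int b *\<^sub>R e2hat)"
definition Q :: "int \<Rightarrow> int \<Rightarrow> int" where "Q a b = a*a + a*b + b*b"

lemma dsq: "(dist ((x1::real, y1::real)) (x2, y2))^2 = (x1-x2)^2 + (y1-y2)^2"
  by (simp add: dist_Pair_Pair dist_real_def)

lemma L_eq: "L eps a b = (eps * (of_int a + of_int b / 2), eps * of_int b * sqrt 3 / 2)"
  by (simp add: L_def e1_def e2hat_def algebra_simps)

lemma poly1: "(r::real) * r = 3 \<Longrightarrow> (eps * (a + b / 2) - eps * (c + d / 2))\<^sup>2 + (eps * b * r / 2 - eps * d * r / 2)\<^sup>2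
   = eps^2 * ((a-c)*(a-c) + (a-c)*(b-d) + (b-d)*(b-d))"
proof -
  assume h: "r * r = 3"
  have "(eps * b * r / 2 - eps * d * r / 2)\<^sup>2 = eps^2*(b-d)^2*(r*r)/4"
    by (simp add: power2_eq_square algebra_simps)
  also have "... = eps^2*(b-d)^2*3/4" using h by simp
  finally show ?thesis by (simp add: power2_eq_square algebra_simps)
qed

lemma distL: "(dist (L eps a b) (L eps c d))^2 = eps^2 * of_int (Q (a-c) (b-d))"
  unfolding L_eq dsq Q_def
  by (subst poly1) simp_all

lemma poly2: "(r::real) * r = 3 \<Longrightarrow> (eps * ((i1 + j1)/2 + (i2 + j2)/4) - eps * (a + b / 2))\<^sup>2 + (eps * (i2 + j2) * r / 4 - eps * b * r / 2)\<^sup>2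
   = eps^2/4 * ((2*a-i1-j1)*(2*a-i1-j1) + (2*a-i1-j1)*(2*b-i2-j2) + (2*b-i2-j2)*(2*b-i2-j2))"
proof -
  assume h: "r * r = 3"
  have "(eps * (i2 + j2) * r / 4 - eps * b * r / 2)\<^sup>2 = eps^2*(i2+j2-2*b)^2*(r*r)/16"
    by (simp add: power2_eq_square algebra_simps)
  also have "... = eps^2*(i2+j2-2*b)^2*3/16" using h by simp
  finally have X: "(eps * (i2 + j2) * r / 4 - eps * b * r / 2)\<^sup>2 = eps^2*(i2+j2-2*b)^2*3/16" .
  show ?thesis unfolding X by (simp add: power2_eq_square field_simps)
qed

lemma distM: "(dist (midpoint (L eps i1 i2) (L eps j1 j2)) (L eps a b))^2 = eps^2/4 * of_int (Q (2*a-i1-j1) (2*b-i2-j2))"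
proof -
  have m: "midpoint (L eps i1 i2) (L eps j1 j2) = (eps * ((of_int i1 + of_int j1)/2 + (of_int i2 + of_int j2)/4), eps * (of_int i2 + of_int j2) * sqrt 3 / 4)"
    unfolding L_eq midpoint_def by (simp add: field_simps)
  show ?thesis
  unfolding m unfolding L_eq dsq Q_def
  by (subst poly2) simp_all
qed
lemma Qbound: assumes "Q a b \<le> n" shows "3*(a*a) \<le> 4*n" "3*(b*b) \<le> 4*n"
proof -
  have "4*Q a b = (2*a+b)*(2*a+b) + 3*(b*b)" "4*Q a b = (2*b+a)*(2*b+a) + 3*(a*a)"
    by (simp_all add: Q_def algebra_simps)
  moreover have "(2*a+b)*(2*a+b) \<ge> 0" "(2*b+a)*(2*b+a) \<ge> 0" by simp_all
  ultimately show "3*(a*a) \<le> 4*n" "3*(b*b) \<le> 4*n" using assms by linarith+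
qed

lemma sq_small: fixes a :: int assumes "a*a < (k+1)*(k+1)" "k \<ge> 0" shows "\<bar>a\<bar> \<le> k"
proof (rule ccontr)
  assume "\<not> \<bar>a\<bar> \<le> k"
  hence "\<bar>a\<bar> \<ge> k+1" by simp
  hence "\<bar>a\<bar>*\<bar>a\<bar> \<ge> (k+1)*(k+1)" using assms(2) by (intro mult_mono) auto
  thus False using assms(1) by (simp add: abs_mult[symmetric])
qed

lemma Z1: assumes "Q d1 d2 = 1"
  shows "(d1=1 \<and> d2=0) \<or> (d1=-1 \<and> d2=0) \<or> (d1=0 \<and> d2=1) \<or> (d1=0 \<and> d2=-1) \<or> (d1=1 \<and> d2=-1) \<or> (d1=-1 \<and> d2=1)"
proof -
  have "\<bar>d1\<bar> \<le> 1" "\<bar>d2\<bar> \<le> 1" using Qbound[of d1 d2 1] assms by (auto intro!: sq_small)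
  hence "d1 \<in> {-1,0,1}" "d2 \<in> {-1,0,1}" by auto
  thus ?thesis using assms by (auto simp: Q_def)
qed

lemma Zmid: assumes "Q d1 d2 = 1" "Q (2*x1-d1) (2*x2-d2) \<le> 4"
  shows "(x1=0 \<and> x2=0) \<or> (x1=d1 \<and> x2=d2) \<or> (x1 = -d2 \<and> x2 = d1+d2) \<or> (x1 = d1+d2 \<and> x2 = -d1)"
proof -
  have "\<bar>2*x1-d1\<bar> \<le> 2" "\<bar>2*x2-d2\<bar> \<le> 2" using Qbound[OF assms(2)] by (auto intro!: sq_small)
  moreover have "\<bar>d1\<bar> \<le> 1" "\<bar>d2\<bar> \<le> 1" using Qbound[of d1 d2 1] assms by (auto intro!: sq_small)
  ultimately have "x1 \<in> {-1,0,1}" "x2 \<in> {-1,0,1}" by auto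
  thus ?thesis using assms Z1[OF assms(1)] by (auto simp: Q_def)
qed

lemma Zseg: assumes "Q d1 d2 = 1" "Q (2*x1-d1) (2*x2-d2) \<le> 1"
  shows "(x1=0 \<and> x2=0) \<or> (x1=d1 \<and> x2=d2)"
proof -
  have "Q (2*x1-d1) (2*x2-d2) \<le> 4" using assms(2) by simp
  from Zmid[OF assms(1) this] show ?thesis using assms Z1[OF assms(1)] by (auto simp: Q_def)
qed

lemma ZML:
  assumes d: "Q d1 d2 = 1"
    and "Q (2*x1-d1) (2*x2-d2) \<le> 4" "Q (2*y1-d1) (2*y2-d2) \<le> 4" "Q (2*z1-d1) (2*z2-d2) \<le> 4"
    and "Q (x1-y1) (x2-y2) = 1" "Q (y1-z1) (y2-z2) = 1" "Q (x1-z1) (x2-z2) = 1"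
  shows "((x1=0 \<and> x2=0) \<or> (y1=0 \<and> y2=0) \<or> (z1=0 \<and> z2=0)) \<and>
         ((x1=d1 \<and> x2=d2) \<or> (y1=d1 \<and> y2=d2) \<or> (z1=d1 \<and> z2=d2))"
  using Z1[OF d] Zmid[OF d assms(2)] Zmid[OF d assms(3)] Zmid[OF d assms(4)] assms(5-7)
  apply -
  apply (elim disjE conjE)
  apply (simp_all add: Q_def)
  done

lemma lat_L: "i \<in> lattice eps \<longleftrightarrow> (\<exists>a b. i = L eps a b)"
  by (auto simp: lattice_def L_def)

lemma distL_eq: assumes "eps > 0"
  shows "dist (L eps a b) (L eps c d) = eps \<longleftrightarrow> Q (a-c) (b-d) = 1"
proof -
  have "dist (L eps a b) (L eps c d) = eps \<longleftrightarrow> (dist (L eps a b) (L eps c d))^2 = eps^2"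
    using assms by (metis less_eq_real_def power2_eq_imp_eq zero_le_dist)
  also have "... \<longleftrightarrow> eps^2 * of_int (Q (a-c) (b-d)) = eps^2 * 1" unfolding distL by simp
  also have "... \<longleftrightarrow> Q (a-c) (b-d) = 1" using assms by simp
  finally show ?thesis .
qed

lemma distM_le: assumes "eps > 0" "dist (midpoint (L eps i1 i2) (L eps j1 j2)) (L eps a b) \<le> eps * r" "r \<ge> 0"
  shows "of_int (Q (2*a-i1-j1) (2*b-i2-j2)) \<le> 4 * r^2"
proof -
  have "(dist (midpoint (L eps i1 i2) (L eps j1 j2)) (L eps a b))^2 \<le> (eps*r)^2"
    using assms by (intro power_mono) auto
  hence "eps^2 * of_int (Q (2*a-i1-j1) (2*b-i2-j2)) \<le> eps^2 * (4*r^2)"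
    unfolding distM by (simp add: power_mult_distrib)
  thus ?thesis using assms by simp
qed

lemma MidL:
  assumes "eps > 0" "i \<in> lattice eps" "j \<in> lattice eps" "dist i j = eps"
    "a \<in> lattice eps" "b \<in> lattice eps" "c \<in> lattice eps"
    "dist a b = eps" "dist b c = eps" "dist a c = eps"
    "midpoint i j \<in> convex hull {a,b,c}"
  shows "i \<in> {a,b,c} \<and> j \<in> {a,b,c}"
proof -
  obtain i1 i2 j1 j2 a1 a2 b1 b2 c1 c2 where
    p: "i = L eps i1 i2" "j = L eps j1 j2" "a = L eps a1 a2" "b = L eps b1 b2" "c = L eps c1 c2"
    using assms(2,3,5,6,7) unfolding lat_L by metis
  have ha: "convex hull {a,b,c} \<subseteq> cball a eps" "convex hull {a,b,c} \<subseteq> cball b eps"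
     "convex hull {a,b,c} \<subseteq> cball c eps"
    using assms(1,8,9,10) by (intro hull_minimal; auto simp: dist_commute)+
  have "dist (midpoint i j) a \<le> eps * 1" "dist (midpoint i j) b \<le> eps * 1" "dist (midpoint i j) c \<le> eps * 1"
  proof -
    have "midpoint i j \<in> cball a eps" "midpoint i j \<in> cball b eps" "midpoint i j \<in> cball c eps"
      using ha assms(11) by blast+
    thus "dist (midpoint i j) a \<le> eps * 1" "dist (midpoint i j) b \<le> eps * 1" "dist (midpoint i j) c \<le> eps * 1"
      by (simp_all add: dist_commute)
  qed
  hence "of_int (Q (2*a1-i1-j1) (2*a2-i2-j2)) \<le> 4*(1::real)^2" "of_int (Q (2*b1-i1-j1) (2*b2-i2-j2)) \<le> 4*(1::real)^2"
     "of_int (Q (2*c1-i1-j1) (2*c2-i2-j2)) \<le> 4*(1::real)^2"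
    unfolding p by (intro distM_le[OF assms(1)]; simp)+
  hence q: "Q (2*a1-i1-j1) (2*a2-i2-j2) \<le> 4" "Q (2*b1-i1-j1) (2*b2-i2-j2) \<le> 4" "Q (2*c1-i1-j1) (2*c2-i2-j2) \<le> 4"
    by simp_all
  have d: "Q (j1-i1) (j2-i2) = 1" "Q (a1-b1) (a2-b2) = 1" "Q (b1-c1) (b2-c2) = 1" "Q (a1-c1) (a2-c2) = 1"
    using assms(4,8,9,10) distL_eq[OF assms(1)] unfolding p by (metis dist_commute)+
  have e: "2*(a1-i1) - (j1-i1) = 2*a1-i1-j1" "2*(a2-i2) - (j2-i2) = 2*a2-i2-j2"
       "2*(b1-i1) - (j1-i1) = 2*b1-i1-j1" "2*(b2-i2) - (j2-i2) = 2*b2-i2-j2"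
       "2*(c1-i1) - (j1-i1) = 2*c1-i1-j1" "2*(c2-i2) - (j2-i2) = 2*c2-i2-j2"
       "(a1-i1) - (b1-i1) = a1-b1" "(a2-i2) - (b2-i2) = a2-b2" "(b1-i1) - (c1-i1) = b1-c1"
       "(b2-i2) - (c2-i2) = b2-c2" "(a1-i1) - (c1-i1) = a1-c1" "(a2-i2) - (c2-i2) = a2-c2" by simp_all
  have "((a1-i1=0 \<and> a2-i2=0) \<or> (b1-i1=0 \<and> b2-i2=0) \<or> (c1-i1=0 \<and> c2-i2=0)) \<and>
         ((a1-i1=j1-i1 \<and> a2-i2=j2-i2) \<or> (b1-i1=j1-i1 \<and> b2-i2=j2-i2) \<or> (c1-i1=j1-i1 \<and> c2-i2=j2-i2))"
    using ZML[of "j1-i1" "j2-i2" "a1-i1" "a2-i2" "b1-i1" "b2-i2" "c1-i1" "c2-i2"] q d unfolding e by blast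
  thus ?thesis unfolding p by auto
qed

lemma SegL:
  assumes "eps > 0" "i \<in> lattice eps" "j \<in> lattice eps" "dist i j = eps"
    "k \<in> lattice eps" "k \<in> closed_segment i j"
  shows "k = i \<or> k = j"
proof -
  obtain i1 i2 j1 j2 k1 k2 where
    p: "i = L eps i1 i2" "j = L eps j1 j2" "k = L eps k1 k2"
    using assms(2,3,5) unfolding lat_L by metis
  have "closed_segment i j \<subseteq> cball (midpoint i j) (eps/2)"
    using assms(4) by (intro closed_segment_subset) (auto simp: dist_midpoint)
  hence "dist (midpoint i j) k \<le> eps * (1/2)" using assms(6) by auto
  hence "of_int (Q (2*k1-i1-j1) (2*k2-i2-j2)) \<le> 4 * (1/2::real)^2"
    using distM_le[OF assms(1)] unfolding p by simp
  hence q: "Q (2*(k1-i1) - (j1-i1)) (2*(k2-i2)-(j2-i2)) \<le> 1" by (simp add: power2_eq_square algebra_simps)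
  have d: "Q (j1-i1) (j2-i2) = 1"
    using assms(4) distL_eq[OF assms(1)] unfolding p by (metis dist_commute)
  from Zseg[OF d q] show ?thesis unfolding p by auto
qed

definition Good :: "real \<Rightarrow> (pt \<Rightarrow> spin) \<Rightarrow> pt set \<Rightarrow> spin \<Rightarrow> bool" where
  "Good eps u T p \<longleftrightarrow> (\<forall>i j. i \<in> lattice eps \<and> j \<in> lattice eps \<and> dist i j = eps \<and> u i = - u j
      \<and> midpoint i j \<in> T \<longrightarrow> u i \<in> {p, -p})"

lemma tri_good:
  assumes "eps > 0" "T \<in> triangles eps" "i0 \<in> lattice eps" "j0 \<in> lattice eps" "dist i0 j0 = eps"
    "u i0 = - u j0" "midpoint i0 j0 \<in> T"
  shows "Good eps u T (u i0)"
  unfolding Good_def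
proof (intro allI impI)
  fix i j assume h: "i \<in> lattice eps \<and> j \<in> lattice eps \<and> dist i j = eps \<and> u i = - u j \<and> midpoint i j \<in> T"
  obtain a b c where T: "T = convex hull {a,b,c}" "a \<in> lattice eps" "b \<in> lattice eps" "c \<in> lattice eps"
    "dist a b = eps" "dist b c = eps" "dist a c = eps"
    using assms(2) unfolding triangles_def by (auto simp: dist_commute)
  have 1: "i \<in> {a,b,c} \<and> j \<in> {a,b,c}" using MidL[OF assms(1), of i j a b c] h T by simp
  have 2: "i0 \<in> {a,b,c} \<and> j0 \<in> {a,b,c}" using MidL[OF assms(1), of i0 j0 a b c] assms T by simp
  have "i \<noteq> j" "i0 \<noteq> j0" using h assms(1,5) by auto
  hence "i = i0 \<or> i = j0 \<or> j = i0 \<or> j = j0" using 1 2 by blast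
  thus "u i \<in> {u i0, - u i0}" using h assms(6) by auto
qed

lemma good_swap: "Good eps u T q \<Longrightarrow> q \<in> {p, -p} \<Longrightarrow> Good eps u T p"
  unfolding Good_def by (metis (no_types, lifting) empty_iff insert_iff minus_minus)

lemma good_step:
  assumes "eps > 0" "neighbours eps u T1 T2" "Good eps u T1 p"
  shows "Good eps u T2 p"
proof -
  obtain i j where ij: "T1 \<inter> T2 = closed_segment i j" "i \<in> lattice eps" "j \<in> lattice eps"
    "dist i j = eps" "u i = - u j"
    using assms(2) unfolding neighbours_def frustrated_def by blast
  have m: "midpoint i j \<in> T1" "midpoint i j \<in> T2" using ij(1) midpoint_in_closed_segment by blast+
  have "u i \<in> {p, -p}" using assms(3) ij m unfolding Good_def by blast
  moreover have "Good eps u T2 (u i)"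
    using tri_good[OF assms(1) _ ij(2,3,4,5) m(2)] assms(2) unfolding neighbours_def by blast
  ultimately show ?thesis using good_swap by blast
qed

lemma good_star:
  assumes "eps > 0" "(neighbours eps u)\<^sup>*\<^sup>* T1 T2" "Good eps u T1 p"
  shows "Good eps u T2 p"
  using assms(2,3)
proof (induction rule: rtranclp_induct)
  case base thus ?case .
next
  case (step y z) thus ?case using good_step[OF assms(1)] by blast
qed

theorem lemma5p2:
  fixes eps :: real and \<Omega> :: "pt set" and u :: "pt \<Rightarrow> spin" and R :: "pt set"
  assumes "eps > 0" and "bounded \<Omega>" and "open \<Omega>"
    and "u \<in> SF eps \<Omega>" and "R \<in> regions eps u"
  shows "{u i | i. i \<in> lattice eps \<and> (\<exists>\<Gamma>\<in>frustrated eps u. i \<in> \<Gamma> \<and> \<Gamma> \<subseteq> R)} = {}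
       \<or> (\<exists>p\<in>sphere2. {u i | i. i \<in> lattice eps \<and> (\<exists>\<Gamma>\<in>frustrated eps u. i \<in> \<Gamma> \<and> \<Gamma> \<subseteq> R)} = {p, - p})"
    (is "?W = {} \<or> _")
proof (cases "?W = {}")
  case True thus ?thesis by blast
next
  case False
  obtain C where C: "R = \<Union>C" "C \<subseteq> triangles eps" "\<forall>T1\<in>C. \<forall>T2\<in>C. tri_connected eps u T1 T2"
    using assms(5) unfolding regions_def connected_unions_def by blast
  have key: "\<exists>T\<in>C. midpoint i j \<in> T \<and> i \<in> lattice eps \<and> j \<in> lattice eps \<and> dist i j = eps \<and> u i = - u j
       \<and> (k = i \<or> k = j)"
    if "k \<in> lattice eps" "\<Gamma> \<in> frustrated eps u" "k \<in> \<Gamma>" "\<Gamma> \<subseteq> R" "\<Gamma> = closed_segment i j"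
       "i \<in> lattice eps" "j \<in> lattice eps" "dist i j = eps" "u i = - u j" for k \<Gamma> i j
  proof -
    have "midpoint i j \<in> R" using that midpoint_in_closed_segment by blast
    then obtain T where "T \<in> C" "midpoint i j \<in> T" using C(1) by blast
    moreover have "k = i \<or> k = j" using SegL[OF assms(1)] that by blast
    ultimately show ?thesis using that by blast
  qed
  from False obtain k \<Gamma> where k: "k \<in> lattice eps" "\<Gamma> \<in> frustrated eps u" "k \<in> \<Gamma>" "\<Gamma> \<subseteq> R" by blast
  then obtain i0 j0 where ij0: "\<Gamma> = closed_segment i0 j0" "i0 \<in> lattice eps" "j0 \<in> lattice eps"
    "dist i0 j0 = eps" "u i0 = - u j0" unfolding frustrated_def by blast
  obtain T0 where T0: "T0 \<in> C" "midpoint i0 j0 \<in> T0" using key[OF k ij0] by blast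
  have G0: "Good eps u T0 (u i0)" using tri_good[OF assms(1) _ ij0(2-5) T0(2)] T0(1) C(2) by blast
  have p: "u i0 \<in> sphere2" using assms(4) ij0(2) unfolding SF_def by blast
  have "?W = {u i0, - u i0}"
  proof
    show "?W \<subseteq> {u i0, - u i0}"
    proof
      fix y assume "y \<in> ?W"
      then obtain k' \<Gamma>' where k': "y = u k'" "k' \<in> lattice eps" "\<Gamma>' \<in> frustrated eps u" "k' \<in> \<Gamma>'" "\<Gamma>' \<subseteq> R" by blast
      then obtain i j where ij: "\<Gamma>' = closed_segment i j" "i \<in> lattice eps" "j \<in> lattice eps"
        "dist i j = eps" "u i = - u j" unfolding frustrated_def by blast
      obtain T where T: "T \<in> C" "midpoint i j \<in> T" "k' = i \<or> k' = j" using key[OF k'(2-5) ij] by blast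
      have "(neighbours eps u)\<^sup>*\<^sup>* T0 T" using C(3) T0(1) T(1) unfolding tri_connected_def by blast
      hence "Good eps u T (u i0)" using good_star[OF assms(1) _ G0] by blast
      hence "u i \<in> {u i0, - u i0}" using ij T unfolding Good_def by blast
      moreover have "u j = - u i" using ij(5) by simp
      ultimately show "y \<in> {u i0, - u i0}" using T(3) k'(1) by (elim disjE) auto
    qed
    show "{u i0, - u i0} \<subseteq> ?W"
    proof -
      have "i0 \<in> \<Gamma>" "j0 \<in> \<Gamma>" using ij0(1) by auto
      hence "u i0 \<in> ?W" "u j0 \<in> ?W" using k(2,4) ij0(2,3) by blast+
      moreover have "- u i0 = u j0" using ij0(5) by simp
      ultimately show ?thesis by simp
    qed
  qed
  thus ?thesis using p by blast
qed

end
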